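(* Let $M\subset\mathbb{R}^{2d}$ satisfy the standing assumptions below and let $T$ be its outer symplectic billiard map. For every integer $k\ge1$ there exists a constant $\rho=\rho(k,M)>0$ such that there are no $k$-periodic orbits of $T$ outside the ball of radius $\rho$ centered at the origin; that is, every point $z$ in the exterior of $M$ with $T^k(z)=z$ satisfies $|z|\le\rho$.
   Context: Equip $\mathbb{R}^{2d}$ with the standard inner product, Euclidean norm $|\cdot|$, complex structure $J$ and symplectic form $\omega(u,v)=\langle Ju,v\rangle$. Standing assumptions: $M\subset\mathbb{R}^{2d}$ is a smooth closed hypersurface bounding a strictly convex domain containing the origin in its interior, and $M$ is a level set of a smooth function with positive definite Hessian. For $q\in M$ the Reeb vector $R(q)$ is the unique vector with $\omega(v,R(q))=0$ for all $v\in T_qM$ and $\omega(q,R(q))=1$. For $x$ in the exterior of $M$ there is a unique $m_-(x)\in M$ with $m_-(x)-x=\lambda R(m_-(x))$ for some $\lambda>0$; the outer symplectic billiard map is $T(x)=2m_-(x)-x$. *)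

theory Defs
  imports "HOL-Analysis.Analysis"
begin

text \<open>We model R^(2d) as (real^'d) \<times> (real^'d), i.e. points (x,y) with z = x + i y.
  The inner product on the product type is the standard one.\<close>

type_synonym 'd R2d = "(real^'d) \<times> (real^'d)"

definition cplxJ :: "'d::finite R2d \<Rightarrow> 'd R2d" where
  "cplxJ u = (- snd u, fst u)"

definition symp :: "'d::finite R2d \<Rightarrow> 'd R2d \<Rightarrow> real" where
  "symp u v = inner (cplxJ u) v"

fun hdiff :: "('a::real_normed_vector \<Rightarrow> real) \<Rightarrow> 'a list \<Rightarrow> 'a \<Rightarrow> real" where
  "hdiff F [] = F"
| "hdiff F (v # vs) = (\<lambda>x. frechet_derivative (hdiff F vs) (at x) v)"

definition smooth_fun :: "('a::real_normed_vector \<Rightarrow> real) \<Rightarrow> bool" where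
  "smooth_fun F \<longleftrightarrow> (\<forall>vs x. hdiff F vs differentiable (at x))"

definition hessian_pos_def :: "('a::real_normed_vector \<Rightarrow> real) \<Rightarrow> bool" where
  "hessian_pos_def F \<longleftrightarrow> (\<forall>x u. u \<noteq> 0 \<longrightarrow> hdiff F [u, u] x > 0)"

definition tangent_space :: "('a::real_normed_vector \<Rightarrow> real) \<Rightarrow> 'a \<Rightarrow> 'a set" where
  "tangent_space F q = {v. frechet_derivative F (at q) v = 0}"

definition reeb :: "('d::finite R2d \<Rightarrow> real) \<Rightarrow> 'd R2d \<Rightarrow> 'd R2d" where
  "reeb F q = (THE r. (\<forall>v\<in>tangent_space F q. symp v r = 0) \<and> symp q r = 1)"

definition m_minus :: "('d::finite R2d \<Rightarrow> real) \<Rightarrow> 'd R2d set \<Rightarrow> 'd R2d \<Rightarrow> 'd R2d" where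
  "m_minus F M x = (THE m. m \<in> M \<and> (\<exists>t>0. m - x = t *\<^sub>R reeb F m))"

definition outer_billiard :: "('d::finite R2d \<Rightarrow> real) \<Rightarrow> 'd R2d set \<Rightarrow> 'd R2d \<Rightarrow> 'd R2d" where
  "outer_billiard F M x = 2 *\<^sub>R m_minus F M x - x"

end

theory Submission imports Defs begin

lemma J_inner[simp]: "cplxJ u \<bullet> cplxJ v = u \<bullet> v"
  by (simp add: cplxJ_def inner_prod_def)
lemma J_skew: "cplxJ u \<bullet> v = - (u \<bullet> cplxJ v)"
  by (simp add: cplxJ_def inner_prod_def inner_commute)
lemma JJ[simp]: "cplxJ (cplxJ u) = - u"
  by (cases u) (simp add: cplxJ_def)
lemma J_self[simp]: "cplxJ u \<bullet> u = 0"
  by (simp add: cplxJ_def inner_prod_def inner_commute)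
lemma J_self2[simp]: "u \<bullet> cplxJ u = 0"
  by (simp add: cplxJ_def inner_prod_def inner_commute)
lemma J_diff: "cplxJ (u - v) = cplxJ u - cplxJ v"
  by (simp add: cplxJ_def)
lemma J_add: "cplxJ (u + v) = cplxJ u + cplxJ v"
  by (simp add: cplxJ_def)
lemma J_scale: "cplxJ (a *\<^sub>R u) = a *\<^sub>R cplxJ u"
  by (simp add: cplxJ_def)
lemma J_minus: "cplxJ (- u) = - cplxJ u"
  by (simp add: cplxJ_def)
lemma J_norm[simp]: "norm (cplxJ u) = norm u"
  by (simp add: norm_eq_sqrt_inner)
lemma J_zero_iff[simp]: "cplxJ u = 0 \<longleftrightarrow> u = 0"
  by (metis J_norm norm_eq_zero)

definition grad :: "('a::euclidean_space \<Rightarrow> real) \<Rightarrow> 'a \<Rightarrow> 'a" where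
  "grad F x = (\<Sum>b\<in>Basis. frechet_derivative F (at x) b *\<^sub>R b)"

lemma linear_repr:
  fixes L :: "'a::euclidean_space \<Rightarrow> real"
  assumes "linear L"
  shows "L v = (\<Sum>b\<in>Basis. L b *\<^sub>R b) \<bullet> v"
proof -
  have "L v = L (\<Sum>b\<in>Basis. (v \<bullet> b) *\<^sub>R b)" by (simp add: euclidean_representation)
  also have "\<dots> = (\<Sum>b\<in>Basis. (v \<bullet> b) * L b)"
    using assms by (simp add: linear_sum linear_scale)
  also have "\<dots> = (\<Sum>b\<in>Basis. L b *\<^sub>R b) \<bullet> v"
    by (simp add: inner_sum_right inner_commute mult.commute)
  finally show ?thesis .
qed

locale cvx =
  fixes F :: "'d::finite R2d \<Rightarrow> real" and c :: real
  assumes smooth: "smooth_fun F" and hess: "hessian_pos_def F"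
    and F0: "F 0 < c" and Mc: "compact {x. F x = c}"
begin

lemma fd: "(F has_derivative frechet_derivative F (at x)) (at x)"
proof -
  have "hdiff F [] differentiable (at x)" using smooth smooth_fun_def by blast
  then show ?thesis by (simp add: frechet_derivative_works)
qed

lemma fd_eq: "frechet_derivative F (at x) v = grad F x \<bullet> v"
  unfolding grad_def using fd has_derivative_linear linear_repr by blast

lemma deriv: "(F has_derivative (\<lambda>v. grad F x \<bullet> v)) (at x)"
proof -
  have "frechet_derivative F (at x) = (\<lambda>v. grad F x \<bullet> v)" by (rule ext) (rule fd_eq)
  then show ?thesis using fd by metis
qed

lemma contF: "continuous_on S F"
  by (meson deriv has_derivative_continuous continuous_at_imp_continuous_on)

lemma line_deriv:
  "((\<lambda>t. F (x + t *\<^sub>R u)) has_real_derivative (grad F (x + t *\<^sub>R u) \<bullet> u)) (at t)"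
proof -
  have 1: "((\<lambda>t. x + t *\<^sub>R u) has_derivative (\<lambda>h. h *\<^sub>R u)) (at t)"
    by (auto intro!: derivative_eq_intros)
  have "((\<lambda>t. F (x + t *\<^sub>R u)) has_derivative (\<lambda>h. grad F (x + t *\<^sub>R u) \<bullet> (h *\<^sub>R u))) (at t)"
    using has_derivative_compose[OF 1 deriv] by (simp add: o_def)
  moreover have "(\<lambda>h. grad F (x + t *\<^sub>R u) \<bullet> (h *\<^sub>R u)) = (*) (grad F (x + t *\<^sub>R u) \<bullet> u)"
    by (auto simp: mult.commute)
  ultimately show ?thesis by (simp add: has_field_derivative_def)
qed

lemma line_deriv2:
  assumes "u \<noteq> 0"
  shows "\<exists>D. ((\<lambda>t. grad F (x + t *\<^sub>R u) \<bullet> u) has_real_derivative D) (at t) \<and> D > 0"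
proof -
  define \<psi> where "\<psi> = hdiff F [u]"
  have psi: "\<psi> z = grad F z \<bullet> u" for z by (simp add: \<psi>_def fd_eq)
  have d: "(\<psi> has_derivative frechet_derivative \<psi> (at z)) (at z)" for z
  proof -
    have "hdiff F [u] differentiable (at z)" using smooth unfolding smooth_fun_def by blast
    then show ?thesis unfolding \<psi>_def using frechet_derivative_works by blast
  qed
  have pos: "frechet_derivative \<psi> (at z) u > 0" for z
  proof -
    have "hdiff F [u, u] z > 0" using hess assms unfolding hessian_pos_def_def by blast
    then show ?thesis unfolding \<psi>_def by simp
  qed
  have 1: "((\<lambda>t. x + t *\<^sub>R u) has_derivative (\<lambda>h. h *\<^sub>R u)) (at t)"
    by (auto intro!: derivative_eq_intros)
  let ?z = "x + t *\<^sub>R u"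
  have "((\<lambda>t. \<psi> (x + t *\<^sub>R u)) has_derivative (\<lambda>h. frechet_derivative \<psi> (at ?z) (h *\<^sub>R u))) (at t)"
    using has_derivative_compose[OF 1 d] by (simp add: o_def)
  moreover have "(\<lambda>h. frechet_derivative \<psi> (at ?z) (h *\<^sub>R u)) = (*) (frechet_derivative \<psi> (at ?z) u)"
    using has_derivative_linear[OF d] by (auto simp: linear_scale mult.commute)
  ultimately have "((\<lambda>t. \<psi> (x + t *\<^sub>R u)) has_real_derivative frechet_derivative \<psi> (at ?z) u) (at t)"
    by (simp add: has_field_derivative_def)
  moreover have "(\<lambda>t. \<psi> (x + t *\<^sub>R u)) = (\<lambda>t. grad F (x + t *\<^sub>R u) \<bullet> u)"
    using psi by blast
  ultimately show ?thesis using pos[of ?z] by metis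
qed

lemma SGI:
  assumes "y \<noteq> x"
  shows "F y > F x + grad F x \<bullet> (y - x)"
proof -
  define u where "u = y - x"
  have u: "u \<noteq> 0" using assms u_def by auto
  define \<phi> where "\<phi> t = F (x + t *\<^sub>R u)" for t
  obtain z where z: "0 < z" "z < 1" "\<phi> 1 - \<phi> 0 = (1 - 0) * (grad F (x + z *\<^sub>R u) \<bullet> u)"
    using MVT2[of 0 1 \<phi> "\<lambda>t. grad F (x + t *\<^sub>R u) \<bullet> u"] line_deriv unfolding \<phi>_def by auto
  have "(\<lambda>t. grad F (x + t *\<^sub>R u) \<bullet> u) 0 < (\<lambda>t. grad F (x + t *\<^sub>R u) \<bullet> u) z"
    using DERIV_pos_imp_increasing[OF z(1)] line_deriv2[OF u] by blast
  then show ?thesis using z unfolding \<phi>_def u_def by (simp add: algebra_simps)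
qed

lemma GI: "F y \<ge> F x + grad F x \<bullet> (y - x)"
  using SGI[of y x] by (cases "y = x") auto


lemma grad_M_pos: "F m = c \<Longrightarrow> grad F m \<bullet> m \<ge> c - F 0"
  using GI[where y=0 and x=m] by (simp add: inner_diff_right)

lemma grad_M_nz: "F m = c \<Longrightarrow> grad F m \<noteq> 0"
  using grad_M_pos[of m] F0 by auto

lemma grad_exists_nz: "\<exists>p. grad F p \<noteq> 0"
proof (rule ccontr)
  assume "\<not> ?thesis"
  then have g: "\<And>p. grad F p = 0" by blast
  obtain u :: "'d R2d" where "u \<in> Basis" using nonempty_Basis by blast
  then have u: "u \<noteq> 0" using nonzero_Basis by blast
  have "F u > F 0" using SGI[of u 0] u g by auto
  moreover have "F 0 > F u" using SGI[of 0 u] u g by auto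
  ultimately show False by simp
qed

lemma dim2: "2 \<le> DIM('d R2d)"
proof -
  have "CARD('d) \<ge> 1" by (simp add: Suc_le_eq)
  moreover have "DIM('d R2d) = CARD('d) + CARD('d)" by simp
  ultimately show ?thesis by linarith
qed

lemma K_bounded: "\<exists>B. \<forall>y. F y \<le> c \<longrightarrow> norm y \<le> B"
proof -
  obtain B0 where B0: "\<And>m. F m = c \<Longrightarrow> norm m \<le> B0"
    using compact_imp_bounded[OF Mc] unfolding bounded_iff by auto
  define S :: "'d R2d set" where "S = - cball 0 B0"
  have conS: "connected S" unfolding S_def
    by (rule connected_complement_bounded_convex[OF bounded_cball convex_cball dim2])
  obtain p where p: "grad F p \<noteq> 0" using grad_exists_nz by auto
  define G where "G = grad F p"
  have GG: "G \<bullet> G > 0" using p G_def by simp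
  have nG: "norm G > 0" using p G_def by simp
  define t1 where "t1 = (\<bar>c - F p\<bar> + 1) / (G \<bullet> G)"
  define t2 where "t2 = (\<bar>B0\<bar> + norm p + 1) / norm G"
  have t1: "t1 > 0" "t1 * (G \<bullet> G) = \<bar>c - F p\<bar> + 1" using GG unfolding t1_def by auto
  have "\<bar>B0\<bar> + norm p + 1 > 0" using norm_ge_zero[of p] abs_ge_zero[of B0] by linarith
  then have t2: "t2 > 0" "t2 * norm G = \<bar>B0\<bar> + norm p + 1" using nG unfolding t2_def by auto
  define t where "t = t1 + t2"
  define q where "q = p + t *\<^sub>R G"
  have A: "F q > F p + G \<bullet> (q - p)"
    using SGI[of q p] t1 t2 nG unfolding q_def t_def G_def by auto
  have B: "G \<bullet> (q - p) = t * (G \<bullet> G)" unfolding q_def by simp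
  have C: "t * (G \<bullet> G) \<ge> t1 * (G \<bullet> G)" unfolding t_def using t2 GG by (simp add: distrib_right)
  have Fq: "F q > c" using A B C t1 by linarith
  have D: "norm (t *\<^sub>R G) = t * norm G" using t1 t2 unfolding t_def by simp
  have E: "t * norm G \<ge> t2 * norm G" unfolding t_def using t1 nG by (simp add: distrib_right)
  have "norm (t *\<^sub>R G) \<ge> \<bar>B0\<bar> + norm p + 1" using D E t2 by linarith
  moreover have "norm (t *\<^sub>R G) - norm p \<le> norm q" unfolding q_def
    using norm_diff_ineq[of "t *\<^sub>R G" p] by (simp add: add.commute)
  ultimately have "norm q > B0" by linarith
  then have qS: "q \<in> S" unfolding S_def by auto
  have allS: "F y > c" if yS: "y \<in> S" for y
  proof (rule ccontr)
    assume "\<not> F y > c"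
    moreover have "F y \<noteq> c" using B0[of y] yS unfolding S_def by auto
    ultimately have "F y < c" by auto
    have "connected (F ` S)" using conS contF connected_continuous_image by blast
    then have "c \<in> F ` S"
      using connectedD_interval[of "F ` S" "F y" "F q" c] \<open>F y < c\<close> Fq yS qS by auto
    then obtain w where "w \<in> S" "F w = c" by auto
    then show False using B0[of w] unfolding S_def by auto
  qed
  show ?thesis
  proof (intro exI allI impI)
    fix y assume "F y \<le> c"
    then have "y \<notin> S" using allS[of y] by linarith
    then show "norm y \<le> B0" unfolding S_def by simp
  qed
qed

lemma K_convex: "convex {y. F y \<le> c}"
  unfolding convex_def
proof (intro allI impI ballI, simp)
  fix x y :: "'d R2d" and u v :: real
  assume a: "F x \<le> c" "F y \<le> c" "0 \<le> u" "0 \<le> v" "u + v = 1"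
  define z where "z = u *\<^sub>R x + v *\<^sub>R y"
  have 1: "F x \<ge> F z + grad F z \<bullet> (x - z)" by (rule GI)
  have 2: "F y \<ge> F z + grad F z \<bullet> (y - z)" by (rule GI)
  have "u *\<^sub>R (x - z) + v *\<^sub>R (y - z) = (u *\<^sub>R x + v *\<^sub>R y) - (u + v) *\<^sub>R z"
    by (simp add: algebra_simps)
  then have "u *\<^sub>R (x - z) + v *\<^sub>R (y - z) = 0" using a(5) z_def by simp
  then have "grad F z \<bullet> (u *\<^sub>R (x - z) + v *\<^sub>R (y - z)) = 0" by simp
  then have "u * (grad F z \<bullet> (x - z)) + v * (grad F z \<bullet> (y - z)) = 0"
    by (simp add: inner_add_right)
  moreover have "u * F x + v * F y \<le> c"
  proof -
    have "u * F x \<le> u * c" "v * F y \<le> v * c" using mult_left_mono[OF a(1) a(3)] mult_left_mono[OF a(2) a(4)] by auto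
    moreover have "u * c + v * c = c" using a(5) by (metis distrib_right mult_1)
    ultimately show ?thesis by linarith
  qed
  moreover have "u * F x \<ge> u * (F z + grad F z \<bullet> (x - z))" using mult_left_mono[OF 1 a(3)] .
  moreover have "v * F y \<ge> v * (F z + grad F z \<bullet> (y - z))" using mult_left_mono[OF 2 a(4)] .
  moreover have "u * F z + v * F z = F z" using a(5) by (metis distrib_right mult_1)
  ultimately have "F z \<le> c" by (simp add: distrib_left)
  then show "F (u *\<^sub>R x + v *\<^sub>R y) \<le> c" unfolding z_def .
qed

lemma K_closed: "closed {y. F y \<le> c}"
  by (intro closed_Collect_le contF continuous_on_const)

lemma K_compact: "compact {y. F y \<le> c}"
  unfolding compact_eq_bounded_closed bounded_iff using K_closed K_bounded by auto

lemma strict_mid: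
  assumes "F y1 \<le> c" "F y2 \<le> c" "y1 \<noteq> y2"
  shows "F ((1/2) *\<^sub>R (y1 + y2)) < c"
proof -
  define z where "z = (1/2) *\<^sub>R (y1 + y2)"
  have h: "(1/2) *\<^sub>R w + (1/2) *\<^sub>R w = w" for w :: "'d R2d"
    by (simp flip: scaleR_add_left)
  have d1: "y1 - z = (1/2) *\<^sub>R (y1 - y2)" unfolding z_def using h[of y1] by (simp add: algebra_simps)
  have d2: "y2 - z = (1/2) *\<^sub>R (y2 - y1)" unfolding z_def using h[of y2] by (simp add: algebra_simps)
  have ne: "y1 \<noteq> z" "y2 \<noteq> z" using assms(3) d1 d2 by auto
  have 1: "F y1 > F z + grad F z \<bullet> (y1 - z)" using SGI ne by auto
  have 2: "F y2 > F z + grad F z \<bullet> (y2 - z)" using SGI ne by auto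
  have "(y1 - z) + (y2 - z) = 0" unfolding d1 d2 by (simp add: algebra_simps)
  then have "grad F z \<bullet> (y1 - z) + grad F z \<bullet> (y2 - z) = 0"
    by (metis inner_add_right inner_zero_right)
  then show ?thesis using 1 2 assms unfolding z_def by linarith
qed


lemma interior_improve:
  assumes "F z < c" "w \<noteq> 0"
  shows "\<exists>z'. F z' \<le> c \<and> w \<bullet> z' > w \<bullet> z"
proof -
  have "continuous (at z) F" using contF[of UNIV] continuous_on_eq_continuous_at by blast
  then obtain d where d: "d > 0" "\<And>x'. dist x' z < d \<Longrightarrow> dist (F x') (F z) < c - F z"
    using assms(1) unfolding continuous_at_eps_delta by (meson diff_gt_0_iff_gt)
  have nw: "norm w > 0" using assms(2) by simp
  define z' where "z' = z + (d / 2 / norm w) *\<^sub>R w"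
  have "dist z' z = d / 2" unfolding z'_def dist_norm using nw d by simp
  then have "dist (F z') (F z) < c - F z" using d by auto
  then have "F z' < c" unfolding dist_real_def by linarith
  moreover have "w \<bullet> z' = w \<bullet> z + (d / 2 / norm w) * (w \<bullet> w)" unfolding z'_def
    by (simp add: inner_add_right)
  moreover have "(d / 2 / norm w) * (w \<bullet> w) > 0" using nw d assms(2) by simp
  ultimately show ?thesis by (intro exI[of _ z']) auto
qed

lemma uniq_max:
  assumes "F z1 \<le> c" "F z2 \<le> c" "w \<noteq> 0"
    and m1: "\<And>y. F y \<le> c \<Longrightarrow> w \<bullet> y \<le> w \<bullet> z1"
    and m2: "\<And>y. F y \<le> c \<Longrightarrow> w \<bullet> y \<le> w \<bullet> z2"
  shows "z1 = z2"
proof (rule ccontr)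
  assume ne: "z1 \<noteq> z2"
  define z where "z = (1/2) *\<^sub>R (z1 + z2)"
  have Fz: "F z < c" using strict_mid[OF assms(1,2) ne] z_def by simp
  have eq: "w \<bullet> z1 = w \<bullet> z2" using m1[OF assms(2)] m2[OF assms(1)] by linarith
  have "w \<bullet> z = w \<bullet> z1" unfolding z_def using eq by (simp add: inner_add_right)
  then show False using interior_improve[OF Fz assms(3)] m1 by force
qed

lemma boundary_normal:
  assumes Fm: "F m \<le> c" and w: "w \<noteq> 0" and mx: "\<And>y. F y \<le> c \<Longrightarrow> w \<bullet> y \<le> w \<bullet> m"
  shows "F m = c \<and> (\<exists>s>0. w = s *\<^sub>R grad F m)"
proof -
  have Fmc: "F m = c"
  proof (rule ccontr)
    assume "F m \<noteq> c"
    then have "F m < c" using Fm by auto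
    then obtain z' where "F z' \<le> c" "w \<bullet> z' > w \<bullet> m" using interior_improve[OF _ w] by blast
    then show False using mx[of z'] by linarith
  qed
  define G where "G = grad F m"
  have GG: "G \<bullet> G > 0" using grad_M_nz[OF Fmc] G_def by simp
  have key: "w \<bullet> v \<le> 0" if v: "G \<bullet> v < 0" for v
  proof -
    have "((\<lambda>t. F (m + t *\<^sub>R v)) has_real_derivative (G \<bullet> v)) (at 0)"
      using line_deriv[of m v 0] G_def by simp
    from DERIV_neg_dec_right[OF this v] obtain d where d: "d > 0"
      "\<And>h. h > 0 \<Longrightarrow> h < d \<Longrightarrow> F (m + 0 *\<^sub>R v) > F (m + (0 + h) *\<^sub>R v)" by blast
    have "F (m + (d/2) *\<^sub>R v) < c" using d(2)[of "d/2"] d(1) Fmc by simp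
    then have "w \<bullet> (m + (d/2) *\<^sub>R v) \<le> w \<bullet> m" using mx by simp
    then have "(d/2) * (w \<bullet> v) \<le> 0" by (simp add: inner_add_right)
    then show ?thesis using d(1) by (simp add: mult_le_0_iff)
  qed
  define \<alpha> where "\<alpha> = (w \<bullet> G) / (G \<bullet> G)"
  have star: "w \<bullet> a \<le> \<alpha> * (G \<bullet> a) + w \<bullet> G" for a
  proof -
    define v where "v = a - ((G \<bullet> a) / (G \<bullet> G) + 1) *\<^sub>R G"
    have "G \<bullet> v = G \<bullet> a - ((G \<bullet> a) / (G \<bullet> G) + 1) * (G \<bullet> G)" unfolding v_def by (simp add: inner_diff_right)
    also have "\<dots> = - (G \<bullet> G)" using GG by (simp add: distrib_right)
    finally have "G \<bullet> v < 0" using GG by simp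
    then have "w \<bullet> v \<le> 0" by (rule key)
    moreover have "w \<bullet> v = w \<bullet> a - ((G \<bullet> a) / (G \<bullet> G) + 1) * (w \<bullet> G)" unfolding v_def by (simp add: inner_diff_right)
    moreover have "((G \<bullet> a) / (G \<bullet> G) + 1) * (w \<bullet> G) = \<alpha> * (G \<bullet> a) + w \<bullet> G"
      unfolding \<alpha>_def by (simp add: field_simps)
    ultimately show ?thesis by linarith
  qed
  define a0 where "a0 = w - \<alpha> *\<^sub>R G"
  have Ga0: "G \<bullet> a0 = 0" unfolding a0_def \<alpha>_def using GG by (simp add: inner_diff_right inner_commute)
  have wa0: "w \<bullet> a0 = a0 \<bullet> a0" unfolding a0_def using Ga0[unfolded a0_def]
    by (simp add: inner_diff_left inner_diff_right inner_commute)
  have lam: "lm * (a0 \<bullet> a0) \<le> w \<bullet> G" if "lm > 0" for lm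
    using star[of "lm *\<^sub>R a0"] Ga0 wa0 by simp
  have "a0 \<bullet> a0 = 0"
  proof (rule ccontr)
    assume "a0 \<bullet> a0 \<noteq> 0"
    then have pos: "a0 \<bullet> a0 > 0" by (simp add: order_less_le)
    have "(\<bar>w \<bullet> G\<bar> + 1) / (a0 \<bullet> a0) * (a0 \<bullet> a0) \<le> w \<bullet> G"
      using lam[of "(\<bar>w \<bullet> G\<bar> + 1) / (a0 \<bullet> a0)"] pos by (simp add: add_pos_nonneg)
    then show False using pos by simp
  qed
  then have wa: "w = \<alpha> *\<^sub>R G" unfolding a0_def by simp
  have "w \<bullet> G \<ge> 0" using key[of "- G"] GG by simp
  then have "\<alpha> \<ge> 0" unfolding \<alpha>_def using GG by simp
  moreover have "\<alpha> \<noteq> 0" using w wa by auto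
  ultimately have "\<alpha> > 0" by simp
  then show ?thesis using Fmc wa G_def by blast
qed


lemma contJ: "continuous_on S cplxJ"
  unfolding cplxJ_def by (intro continuous_intros)

definition P :: "'d R2d \<Rightarrow> 'd R2d \<Rightarrow> bool" where
  "P x m \<longleftrightarrow> F m = c \<and> (\<exists>s>0. cplxJ (x - m) = s *\<^sub>R grad F m)"

lemma reeb_eq:
  assumes Fm: "F m = c"
  shows "reeb F m = (1 / (grad F m \<bullet> m)) *\<^sub>R cplxJ (grad F m)"
proof -
  define G where "G = grad F m"
  have Gm: "G \<bullet> m > 0" using grad_M_pos[OF Fm] F0 unfolding G_def by linarith
  have GG: "G \<bullet> G > 0" using grad_M_nz[OF Fm] G_def by simp
  have ts: "tangent_space F m = {v. G \<bullet> v = 0}"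
    unfolding tangent_space_def G_def using fd_eq by auto
  define r0 where "r0 = (1 / (G \<bullet> m)) *\<^sub>R cplxJ G"
  have r0: "(\<forall>v\<in>tangent_space F m. symp v r0 = 0) \<and> symp m r0 = 1"
    unfolding ts symp_def r0_def using Gm by (auto simp: inner_commute)
  have uniq: "r = r0" if r: "(\<forall>v\<in>tangent_space F m. symp v r = 0) \<and> symp m r = 1" for r
  proof -
    define w where "w = r - r0"
    define p where "p = cplxJ w"
    have 1: "v \<bullet> p = 0" if "G \<bullet> v = 0" for v
    proof -
      have vt: "v \<in> tangent_space F m" using that ts by simp
      have "symp v r = 0" "symp v r0 = 0" using r r0 vt by blast+
      then have "cplxJ v \<bullet> r = 0" "cplxJ v \<bullet> r0 = 0" unfolding symp_def by auto
      then have "cplxJ v \<bullet> w = 0" unfolding w_def by (simp add: inner_diff_right)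
      then show ?thesis unfolding p_def using J_skew[of v w] by simp
    qed
    have 2: "m \<bullet> p = 0"
    proof -
      have "cplxJ m \<bullet> r = 1" "cplxJ m \<bullet> r0 = 1" using r r0 unfolding symp_def by auto
      then have "cplxJ m \<bullet> w = 0" unfolding w_def by (simp add: inner_diff_right)
      then show ?thesis unfolding p_def using J_skew[of m w] by simp
    qed
    define \<beta> where "\<beta> = (G \<bullet> p) / (G \<bullet> G)"
    define v where "v = p - \<beta> *\<^sub>R G"
    have Gv: "G \<bullet> v = 0" unfolding v_def \<beta>_def using GG by (simp add: inner_diff_right)
    have "v \<bullet> v = v \<bullet> p - \<beta> * (v \<bullet> G)" unfolding v_def
      by (simp add: inner_diff_right algebra_simps)
    also have "\<dots> = 0" using 1[OF Gv] Gv by (simp add: inner_commute)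
    finally have "v = 0" by simp
    then have pG: "p = \<beta> *\<^sub>R G" unfolding v_def by simp
    then have "\<beta> * (m \<bullet> G) = 0" using 2 by simp
    then have "\<beta> = 0" using Gm by (simp add: inner_commute)
    then have "p = 0" using pG by simp
    then have "w = 0" unfolding p_def by simp
    then show ?thesis unfolding w_def by simp
  qed
  have "reeb F m = r0" unfolding reeb_def
    by (rule the_equality, rule r0, rule uniq, assumption)
  then show ?thesis unfolding r0_def G_def .
qed

lemma char:
  assumes Fm: "F m = c"
  shows "(\<exists>t>0. m - x = t *\<^sub>R reeb F m) \<longleftrightarrow> (\<exists>s>0. cplxJ (x - m) = s *\<^sub>R grad F m)"
proof -
  define G where "G = grad F m"
  have Gm: "G \<bullet> m > 0" using grad_M_pos[OF Fm] F0 unfolding G_def by linarith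
  define a where "a = 1 / (G \<bullet> m)"
  have a: "a > 0" using Gm a_def by simp
  have R: "reeb F m = a *\<^sub>R cplxJ G" using reeb_eq[OF Fm] a_def G_def by simp
  show ?thesis
  proof
    assume "\<exists>t>0. m - x = t *\<^sub>R reeb F m"
    then obtain t where t: "t > 0" "m - x = t *\<^sub>R reeb F m" by blast
    have "cplxJ (m - x) = t *\<^sub>R cplxJ (reeb F m)" using t(2) by (simp add: J_scale)
    also have "\<dots> = - ((t * a) *\<^sub>R G)" using R by (simp add: J_scale)
    finally have e: "cplxJ (m - x) = - ((t * a) *\<^sub>R G)" .
    have "cplxJ (x - m) = - cplxJ (m - x)" by (simp add: J_diff)
    then have "cplxJ (x - m) = (t * a) *\<^sub>R G" using e by simp
    then show "\<exists>s>0. cplxJ (x - m) = s *\<^sub>R grad F m" using t a mult_pos_pos unfolding G_def by blast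
  next
    assume "\<exists>s>0. cplxJ (x - m) = s *\<^sub>R grad F m"
    then obtain s where s: "s > 0" "cplxJ (x - m) = s *\<^sub>R G" unfolding G_def by blast
    have "cplxJ (cplxJ (x - m)) = s *\<^sub>R cplxJ G" using s(2) by (simp add: J_scale)
    then have "m - x = s *\<^sub>R cplxJ G" by (simp add: algebra_simps)
    also have "\<dots> = (s / a) *\<^sub>R (a *\<^sub>R cplxJ G)" using a by simp
    finally show "\<exists>t>0. m - x = t *\<^sub>R reeb F m" using s a R by (intro exI[of _ "s / a"]) auto
  qed
qed

lemma P_opt:
  assumes "P x m" "F y \<le> c"
  shows "cplxJ (x - m) \<bullet> (y - m) \<le> 0"
proof -
  obtain s where s: "s > 0" "cplxJ (x - m) = s *\<^sub>R grad F m" and Fm: "F m = c"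
    using assms(1) unfolding P_def by blast
  have "grad F m \<bullet> (y - m) \<le> 0" using GI[of m y] Fm assms(2) by linarith
  then show ?thesis using s by (simp add: mult_nonneg_nonpos)
qed

lemma P_uniq:
  assumes "P x m1" "P x m2"
  shows "m1 = m2"
proof (rule ccontr)
  assume ne: "m1 \<noteq> m2"
  define p where "p = x - m1"
  define q where "q = x - m2"
  have F1: "F m1 = c" and F2: "F m2 = c" using assms unfolding P_def by auto
  have a1: "cplxJ p \<bullet> (m2 - m1) \<le> 0" using P_opt[OF assms(1)] F2 p_def by simp
  have a2: "cplxJ q \<bullet> (m1 - m2) \<le> 0" using P_opt[OF assms(2)] F1 q_def by simp
  have e1: "cplxJ p \<bullet> (m2 - m1) = - (cplxJ p \<bullet> q)"
  proof -
    have "m2 - m1 = p - q" unfolding p_def q_def by simp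
    then show ?thesis by (simp add: inner_diff_right)
  qed
  have e2: "cplxJ q \<bullet> (m1 - m2) = cplxJ p \<bullet> q"
  proof -
    have "m1 - m2 = q - p" unfolding p_def q_def by simp
    then have "cplxJ q \<bullet> (m1 - m2) = - (cplxJ q \<bullet> p)" by (simp add: inner_diff_right)
    also have "\<dots> = q \<bullet> cplxJ p" using J_skew[of q p] by simp
    finally show ?thesis by (simp add: inner_commute)
  qed
  have z: "cplxJ p \<bullet> (m2 - m1) = 0" using a1 a2 e1 e2 by linarith
  obtain s where s: "s > 0" "cplxJ p = s *\<^sub>R grad F m1" using assms(1) unfolding P_def p_def by blast
  have "grad F m1 \<bullet> (m2 - m1) = 0" using z s by simp
  then show False using SGI[of m2 m1] ne F1 F2 by simp
qed

lemma P_exists: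
  assumes Fx: "F x > c"
  shows "\<exists>m. P x m"
proof -
  define K where "K = {y. F y \<le> c}"
  define \<nu> where "\<nu> y = cplxJ (x - y)" for y
  have nu_nz: "\<nu> y \<noteq> 0" if "y \<in> K" for y
    using that Fx unfolding \<nu>_def K_def by auto
  define Q where "Q y z \<longleftrightarrow> z \<in> K \<and> (\<forall>y'\<in>K. \<nu> y \<bullet> y' \<le> \<nu> y \<bullet> z)" for y z
  define h where "h y = (THE z. Q y z)" for y
  have "0 \<in> K" unfolding K_def using F0 by simp
  then have cK: "compact K" "convex K" "K \<noteq> {}" unfolding K_def
    using K_compact K_convex by blast+
  have exQ: "\<exists>z. Q y z" for y
  proof -
    have "continuous_on K (\<lambda>z. \<nu> y \<bullet> z)" by (intro continuous_intros)
    then obtain z where "z \<in> K" "\<forall>y'\<in>K. \<nu> y \<bullet> y' \<le> \<nu> y \<bullet> z"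
      using continuous_attains_sup[OF cK(1) cK(3)] by blast
    then show ?thesis unfolding Q_def by blast
  qed
  have uQ: "z1 = z2" if "y \<in> K" "Q y z1" "Q y z2" for y z1 z2
    using uniq_max[of z1 z2 "\<nu> y"] that nu_nz[of y] unfolding Q_def K_def by auto
  have hQ: "Q y (h y)" if "y \<in> K" for y
  proof -
    have "\<exists>!z. Q y z" using exQ[of y] uQ[OF that] by blast
    then show ?thesis unfolding h_def by (rule theI')
  qed
  have hK: "h \<in> K \<rightarrow> K" using hQ unfolding Q_def by auto
  have graph: "(\<lambda>y. (y, h y)) ` K = {yz. fst yz \<in> K \<and> Q (fst yz) (snd yz)}"
  proof
    show "(\<lambda>y. (y, h y)) ` K \<subseteq> {yz. fst yz \<in> K \<and> Q (fst yz) (snd yz)}" using hQ by auto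
    show "{yz. fst yz \<in> K \<and> Q (fst yz) (snd yz)} \<subseteq> (\<lambda>y. (y, h y)) ` K"
    proof
      fix yz assume "yz \<in> {yz. fst yz \<in> K \<and> Q (fst yz) (snd yz)}"
      then have "fst yz \<in> K" "Q (fst yz) (snd yz)" by auto
      then have "snd yz = h (fst yz)" using uQ hQ by blast
      then have "yz = (\<lambda>y. (y, h y)) (fst yz)" by (simp add: prod_eq_iff)
      then show "yz \<in> (\<lambda>y. (y, h y)) ` K" using \<open>fst yz \<in> K\<close> by (rule image_eqI)
    qed
  qed
  have closedK: "closed K" unfolding K_def by (rule K_closed)
  have cl1: "closed {yz :: 'd R2d \<times> 'd R2d. fst yz \<in> K}"
  proof -
    have "{yz :: 'd R2d \<times> 'd R2d. fst yz \<in> K} = K \<times> UNIV" by auto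
    then show ?thesis using closed_Times[OF closedK closed_UNIV] by simp
  qed
  have cl2: "closed {yz :: 'd R2d \<times> 'd R2d. snd yz \<in> K}"
  proof -
    have "{yz :: 'd R2d \<times> 'd R2d. snd yz \<in> K} = UNIV \<times> K" by auto
    then show ?thesis using closed_Times[OF closed_UNIV closedK] by simp
  qed
  have cl3: "closed {yz :: 'd R2d \<times> 'd R2d. \<nu> (fst yz) \<bullet> y' \<le> \<nu> (fst yz) \<bullet> snd yz}" for y'
    unfolding \<nu>_def
    by (intro closed_Collect_le continuous_on_inner continuous_on_compose2[OF contJ] continuous_intros) auto
  have eqQ: "{yz. fst yz \<in> K \<and> Q (fst yz) (snd yz)} =
     {yz. fst yz \<in> K} \<inter> {yz. snd yz \<in> K} \<inter> (\<Inter>y'\<in>K. {yz. \<nu> (fst yz) \<bullet> y' \<le> \<nu> (fst yz) \<bullet> snd yz})"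
    unfolding Q_def by auto
  have "closed ((\<lambda>y. (y, h y)) ` K)" unfolding graph eqQ
    by (intro closed_Int closed_INT ballI cl1 cl2 cl3)
  then have ch: "continuous_on K h"
    by (rule continuous_from_closed_graph[OF cK(1) hK])
  obtain m where m: "m \<in> K" "h m = m" using brouwer[OF cK(1) cK(2) cK(3) ch hK] by blast
  have "Q m m" using hQ[OF m(1)] m(2) by simp
  then have "\<And>y. F y \<le> c \<Longrightarrow> \<nu> m \<bullet> y \<le> \<nu> m \<bullet> m" unfolding Q_def K_def by auto
  from boundary_normal[of m "\<nu> m"] this m(1) nu_nz[OF m(1)]
  have "F m = c \<and> (\<exists>s>0. \<nu> m = s *\<^sub>R grad F m)" unfolding K_def by auto
  then show ?thesis unfolding P_def \<nu>_def by blast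
qed


lemma mm:
  assumes "F x > c"
  shows "P x (m_minus F {y. F y = c} x)"
proof -
  have eq: "(m \<in> {y. F y = c} \<and> (\<exists>t>0. m - x = t *\<^sub>R reeb F m)) \<longleftrightarrow> P x m" for m
    unfolding P_def using char[of m x] by auto
  have "m_minus F {y. F y = c} x = (THE m. P x m)"
    unfolding m_minus_def eq ..
  moreover have "\<exists>!m. P x m" using P_exists[OF assms] P_uniq by blast
  ultimately show ?thesis by (simp add: theI')
qed

lemma step:
  assumes "F x > c"
  defines "m \<equiv> m_minus F {y. F y = c} x"
  shows "outer_billiard F {y. F y = c} x = 2 *\<^sub>R m - x" "F (2 *\<^sub>R m - x) > c"
proof -
  show "outer_billiard F {y. F y = c} x = 2 *\<^sub>R m - x" unfolding outer_billiard_def m_def ..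
  have Pm: "P x m" using mm[OF assms(1)] m_def by simp
  then obtain s where s: "s > 0" "cplxJ (x - m) = s *\<^sub>R grad F m" and Fm: "F m = c"
    unfolding P_def by blast
  have ne: "2 *\<^sub>R m - x \<noteq> m"
  proof
    assume "2 *\<^sub>R m - x = m"
    then have "x = m" by (simp add: algebra_simps scaleR_2)
    then show False using Fm assms(1) by simp
  qed
  have "cplxJ (x - m) \<bullet> (m - x) = 0"
  proof -
    have "m - x = - (x - m)" by simp
    then show ?thesis by (metis J_self inner_minus_right neg_equal_0_iff_equal)
  qed
  then have "s * (grad F m \<bullet> (m - x)) = 0" using s by simp
  then have "grad F m \<bullet> (2 *\<^sub>R m - x - m) = 0" using s(1)
    by (simp add: algebra_simps scaleR_2)
  then show "F (2 *\<^sub>R m - x) > c" using SGI[OF ne] Fm by simp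
qed

lemma term_bound:
  assumes Pm: "P x m" and mB: "norm m \<le> B" and ball: "\<And>y. norm y \<le> r \<Longrightarrow> F y \<le> c"
    and r: "r > 0" and x: "x = \<sigma> *\<^sub>R z - (2 * \<sigma>) *\<^sub>R S" and \<sigma>0: "\<sigma> = 1 \<or> \<sigma> = -1"
    and z: "z \<noteq> 0" and SL: "norm S \<le> L"
  shows "\<sigma> * (cplxJ z \<bullet> m) \<ge> r * norm z - (B * r + 2 * L * (r + B))"
proof -
  have nz: "norm z > 0" using z by simp
  have asig: "\<bar>\<sigma>\<bar> = 1" using \<sigma>0 by auto
  have \<sigma>: "\<sigma> * \<sigma> = 1" using \<sigma>0 by auto
  define y where "y = (\<sigma> * r / norm z) *\<^sub>R cplxJ z"
  have ny: "norm y = r" unfolding y_def using asig nz r by (simp add: abs_mult)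
  have Fy: "F y \<le> c" using ball ny by simp
  have A: "cplxJ (x - m) \<bullet> (y - m) \<le> 0" by (rule P_opt[OF Pm Fy])
  have id: "cplxJ (x - m) \<bullet> (y - m) =
      \<sigma> * (cplxJ z \<bullet> y) - \<sigma> * (cplxJ z \<bullet> m) - (2 * \<sigma>) * (cplxJ S \<bullet> (y - m)) - cplxJ m \<bullet> y"
  proof -
    define w where "w = y - m"
    have h1: "cplxJ x = \<sigma> *\<^sub>R cplxJ z - (2 * \<sigma>) *\<^sub>R cplxJ S"
      unfolding x by (simp only: J_diff J_scale)
    have h2: "cplxJ (x - m) \<bullet> w = cplxJ x \<bullet> w - cplxJ m \<bullet> y"
      unfolding w_def by (simp add: J_diff inner_diff_left inner_diff_right)
    have h3: "cplxJ x \<bullet> w = \<sigma> * (cplxJ z \<bullet> w) - (2 * \<sigma>) * (cplxJ S \<bullet> w)"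
      unfolding h1 by (simp only: inner_diff_left inner_scaleR_left)
    have h4: "cplxJ z \<bullet> w = cplxJ z \<bullet> y - cplxJ z \<bullet> m"
      unfolding w_def by (simp only: inner_diff_right)
    show ?thesis unfolding w_def[symmetric] h2 h3 h4 by (simp only: right_diff_distrib)
  qed
  have t1: "\<sigma> * (cplxJ z \<bullet> y) = r * norm z"
  proof -
    have "\<sigma> * (cplxJ z \<bullet> y) = (\<sigma> * \<sigma>) * r / norm z * (cplxJ z \<bullet> cplxJ z)"
      unfolding y_def by simp
    also have "\<dots> = r / norm z * (norm z * norm z)" using \<sigma> by (simp add: dot_square_norm power2_eq_square)
    also have "\<dots> = r * norm z" using nz by simp
    finally show ?thesis .
  qed
  have t3: "\<bar>(2 * \<sigma>) * (cplxJ S \<bullet> (y - m))\<bar> \<le> 2 * L * (r + B)"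
  proof -
    have "\<bar>cplxJ S \<bullet> (y - m)\<bar> \<le> norm (cplxJ S) * norm (y - m)" by (rule Cauchy_Schwarz_ineq2)
    also have "\<dots> \<le> L * (r + B)"
    proof (rule mult_mono)
      show "norm (cplxJ S) \<le> L" using SL by simp
      show "norm (y - m) \<le> r + B" using norm_triangle_ineq4[of y m] ny mB by linarith
      show "0 \<le> L" using SL norm_ge_zero[of S] by linarith
    qed simp
    finally have "\<bar>cplxJ S \<bullet> (y - m)\<bar> \<le> L * (r + B)" .
    then show ?thesis using asig by (simp add: abs_mult)
  qed
  have t4: "\<bar>cplxJ m \<bullet> y\<bar> \<le> B * r"
  proof -
    have "\<bar>cplxJ m \<bullet> y\<bar> \<le> norm (cplxJ m) * norm y" by (rule Cauchy_Schwarz_ineq2)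
    also have "\<dots> \<le> B * r" using mB ny r by (simp add: mult_right_mono)
    finally show ?thesis .
  qed
  show ?thesis using A id t1 t3 t4 by linarith
qed

lemma main:
  assumes k: "k \<ge> 1"
  shows "\<exists>\<rho>>0. \<forall>z. F z > c \<and> (outer_billiard F {y. F y = c} ^^ k) z = z \<longrightarrow> norm z \<le> \<rho>"
proof -
  define T where "T = outer_billiard F {y. F y = c}"
  define mm' where "mm' x = m_minus F {y. F y = c} x" for x
  obtain B where B: "\<And>y. F y \<le> c \<Longrightarrow> norm y \<le> B" using K_bounded by blast
  have B0: "B \<ge> 0" using B[of 0] F0 by simp
  obtain r where r: "r > 0" "\<And>y. norm y \<le> r \<Longrightarrow> F y \<le> c"
  proof -
    have "continuous (at 0) F" using contF[of UNIV] continuous_on_eq_continuous_at by blast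
    then obtain d where d: "d > 0" "\<And>x'. dist x' 0 < d \<Longrightarrow> dist (F x') (F 0) < c - F 0"
      using F0 unfolding continuous_at_eps_delta by (meson diff_gt_0_iff_gt)
    have "F y \<le> c" if "norm y \<le> d / 2" for y
    proof -
      have "dist y 0 < d" using that d(1) by simp
      then have "dist (F y) (F 0) < c - F 0" by (rule d(2))
      then show ?thesis unfolding dist_real_def by linarith
    qed
    then show ?thesis using that[of "d / 2"] d(1) by simp
  qed
  define E where "E = B * r + 2 * (real k * B) * (r + B)"
  have E0: "E \<ge> 0" unfolding E_def using B0 r(1) by simp
  define \<rho> where "\<rho> = real k * B + E / r + 1"
  have \<rho>0: "\<rho> > 0" unfolding \<rho>_def using B0 E0 r(1) by (simp add: add_nonneg_pos)
  have "norm z \<le> \<rho>" if Fz: "F z > c" and per: "(T ^^ k) z = z" for z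
  proof -
    define xs where "xs i = (T ^^ i) z" for i
    define ms where "ms i = mm' (xs i)" for i
    have xsS0: "xs (Suc i) = T (xs i)" for i unfolding xs_def by simp
    have Fxs: "F (xs i) > c" for i
    proof (induction i)
      case 0 then show ?case using Fz unfolding xs_def by simp
    next
      case (Suc i)
      then show ?case using step[OF Suc.IH] xsS0[of i] unfolding T_def by simp
    qed
    have xsS: "xs (Suc i) = 2 *\<^sub>R ms i - xs i" for i
      using step(1)[OF Fxs[of i]] xsS0[of i] unfolding T_def ms_def mm'_def by simp
    have Pms: "P (xs i) (ms i)" for i using mm[OF Fxs[of i]] unfolding ms_def mm'_def by simp
    have msB: "norm (ms i) \<le> B" for i using Pms[of i] B unfolding P_def by simp
    define S where "S i = (\<Sum>j<i. ((-1::real) ^ j) *\<^sub>R ms j)" for i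
    have xsform: "xs i = ((-1::real) ^ i) *\<^sub>R (z - 2 *\<^sub>R S i)" for i
    proof (induction i)
      case 0 then show ?case unfolding xs_def S_def by simp
    next
      case (Suc i)
      have e1: "xs (Suc i) = 2 *\<^sub>R ms i - ((-1::real) ^ i) *\<^sub>R (z - 2 *\<^sub>R S i)"
        using xsS[of i] Suc.IH by simp
      have e2: "S (Suc i) = S i + ((-1::real) ^ i) *\<^sub>R ms i" unfolding S_def by simp
      show ?case unfolding e1 e2 by (cases "even i") (simp_all add: algebra_simps scaleR_2)
    qed
    have SB: "norm (S i) \<le> real i * B" for i
    proof -
      have "norm (S i) \<le> (\<Sum>j<i. B)" unfolding S_def
        by (rule sum_norm_le) (simp add: msB)
      then show ?thesis by simp
    qed
    show ?thesis
    proof (cases "z = 0")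
      case True then show ?thesis using \<rho>0 by simp
    next
      case znz: False
      have xk: "xs k = z" using per unfolding xs_def by simp
      show ?thesis
      proof (cases "even k")
        case False
        then have "z = - (z - 2 *\<^sub>R S k)" using xk xsform[of k] by simp
        then have "(2::real) *\<^sub>R z = 2 *\<^sub>R S k" by (simp add: algebra_simps scaleR_2)
        then have "z = S k" by simp
        then have "norm z \<le> real k * B" using SB[of k] by simp
        moreover have "E / r \<ge> 0" using E0 r(1) by simp
        ultimately show ?thesis unfolding \<rho>_def by linarith
      next
        case True
        then have "z = z - 2 *\<^sub>R S k" using xk xsform[of k] by simp
        then have Sk: "S k = 0" by simp
        have tb: "((-1::real) ^ j) * (cplxJ z \<bullet> ms j) \<ge> r * norm z - E" if "j < k" for j
        proof -
          have sg: "(-1::real) ^ j = 1 \<or> (-1::real) ^ j = -1" by (cases "even j") simp_all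
          have x: "xs j = ((-1::real) ^ j) *\<^sub>R z - (2 * (-1::real) ^ j) *\<^sub>R S j"
            using xsform[of j] by (simp add: algebra_simps)
          have "norm (S j) \<le> real k * B"
            using SB[of j] that B0 by (meson less_imp_le_nat mult_right_mono of_nat_le_iff order_trans)
          from term_bound[OF Pms[of j] msB[of j] r(2) r(1) x sg znz this]
          show ?thesis unfolding E_def by simp
        qed
        have "cplxJ z \<bullet> S k = (\<Sum>j<k. ((-1::real) ^ j) * (cplxJ z \<bullet> ms j))"
          unfolding S_def by (simp add: inner_sum_right)
        also have "\<dots> \<ge> (\<Sum>j<k. r * norm z - E)" by (rule sum_mono) (simp add: tb)
        finally have "real k * (r * norm z - E) \<le> 0" using Sk by simp
        then have "r * norm z - E \<le> 0" using k by (simp add: mult_le_0_iff)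
        then have "norm z \<le> E / r" using r(1) by (simp add: field_simps)
        moreover have "real k * B \<ge> 0" using B0 by simp
        ultimately show ?thesis unfolding \<rho>_def by linarith
      qed
    qed
  qed
  then show ?thesis using \<rho>0 unfolding T_def by blast
qed

end

theorem theorem3p8:
  fixes F :: "'d::finite R2d \<Rightarrow> real" and c :: real and M :: "'d R2d set" and k :: nat
  assumes "smooth_fun F"
    and "hessian_pos_def F"
    and "M = {x. F x = c}"
    and "compact M"
    and "F 0 < c"
    and "k \<ge> 1"
  shows "\<exists>\<rho>>0. \<forall>z. F z > c \<and> (outer_billiard F M ^^ k) z = z \<longrightarrow> norm z \<le> \<rho>"
proof -
  interpret cvx F c using assms by unfold_locales auto
  show ?thesis using main[OF assms(6)] assms(3) by simp
qed

end
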